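(* For $0<\delta<1$ and $\mu\in(0,1)$ let $\Gamma_{1-\delta}(\mu)=\Pr[x\le t,\ y\le t]$, where $(x,y)$ are jointly Gaussian standard normal variables with covariance $1-\delta$ and $t$ is defined by $\Pr[x\le t]=\mu$. For every constant $0<c<1$ there exist constants $C>0$ and $\delta_0>0$ such that for all $\delta\in(0,\delta_0)$ and all $\mu$ with $\delta^c\le\mu\le1-\delta^c$, we have $\mu-\Gamma_{1-\delta}(\mu)\ge C\,\delta^{\frac12+2c}$. *)

theory Defs
  imports "HOL-Probability.Probability"
begin

definition Phi :: "real \<Rightarrow> real" where
  "Phi t = measure (density lborel (\<lambda>x. ennreal (std_normal_density x))) {..t}"

definition bivariate_normal_density :: "real \<Rightarrow> real \<times> real \<Rightarrow> real" where
  "bivariate_normal_density \<rho> p =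
     exp (- ((fst p)^2 - 2 * \<rho> * fst p * snd p + (snd p)^2) / (2 * (1 - \<rho>^2)))
     / (2 * pi * sqrt (1 - \<rho>^2))"

definition Gamma_noise :: "real \<Rightarrow> real \<Rightarrow> real" where
  "Gamma_noise \<rho> \<mu> =
     (let t = (THE t. Phi t = \<mu>)
      in measure (density (lborel :: (real \<times> real) measure)
                     (\<lambda>p. ennreal (bivariate_normal_density \<rho> p)))
                 {p. fst p \<le> t \<and> snd p \<le> t})"

end

theory Submission
  imports Defs
begin

abbreviation "NN \<equiv> density lborel (\<lambda>x. ennreal (std_normal_density x))"

lemma NN_prob: "prob_space NN"
  using prob_space_normal_density[of 1 0] by simp

lemma Phi_meas: "Phi t = measure NN {..t}"
  by (simp add: Phi_def)

lemma dens_lower: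
  fixes M :: "'a measure"
  assumes A[measurable]: "A \<in> sets M" and g[measurable]: "g \<in> borel_measurable M"
    and "\<And>x. x \<in> A \<Longrightarrow> m \<le> g x" and "0 \<le> m"
  shows "ennreal m * emeasure M A \<le> emeasure (density M (\<lambda>x. ennreal (g x))) A"
proof -
  have "ennreal m * emeasure M A = (\<integral>\<^sup>+ x. ennreal m * indicator A x \<partial>M)"
    by (simp add: nn_integral_cmult_indicator)
  also have "\<dots> \<le> (\<integral>\<^sup>+ x. ennreal (g x) * indicator A x \<partial>M)"
    by (intro nn_integral_mono) (auto simp: indicator_def assms(3) ennreal_leI)
  also have "\<dots> = emeasure (density M (\<lambda>x. ennreal (g x))) A"
    by (simp add: emeasure_density)
  finally show ?thesis .
qed

lemma dens_upper:
  fixes M :: "'a measure"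
  assumes A[measurable]: "A \<in> sets M" and g[measurable]: "g \<in> borel_measurable M"
    and h[measurable]: "h \<in> borel_measurable M"
    and "\<And>x. x \<in> A \<Longrightarrow> g x \<le> h x"
  shows "emeasure (density M (\<lambda>x. ennreal (g x))) A \<le> (\<integral>\<^sup>+ x. ennreal (h x) \<partial>M)"
proof -
  have "emeasure (density M (\<lambda>x. ennreal (g x))) A = (\<integral>\<^sup>+ x. ennreal (g x) * indicator A x \<partial>M)"
    by (simp add: emeasure_density)
  also have "\<dots> \<le> (\<integral>\<^sup>+ x. ennreal (h x) \<partial>M)"
    by (intro nn_integral_mono) (auto simp: indicator_def assms(4) ennreal_leI)
  finally show ?thesis .
qed

lemma nd_int1: "0 < s \<Longrightarrow> (\<integral>\<^sup>+ y. ennreal (normal_density m s y) \<partial>lborel) = 1"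
proof -
  assume s: "0 < s"
  interpret prob_space "density lborel (normal_density m s)" by (rule prob_space_normal_density[OF s])
  have "emeasure (density lborel (normal_density m s)) UNIV = 1"
    using emeasure_space_1 by simp
  then show ?thesis by (simp add: emeasure_density)
qed

lemma std_le1: "std_normal_density x \<le> 1"
proof -
  have "exp (- x\<^sup>2 / 2) \<le> 1" by simp
  moreover have "1 / sqrt (2*pi) \<le> 1" using pi_gt3 by (simp add: divide_le_eq_1 real_le_rsqrt)
  ultimately show ?thesis unfolding std_normal_density_def
    by (metis mult_le_one divide_nonneg_nonneg exp_ge_zero order.trans real_sqrt_ge_zero zero_le_one  less_eq_real_def)
qed

lemma Phi_diff: "a \<le> b \<Longrightarrow> Phi b - Phi a = measure NN {a<..b}"
proof -
  interpret prob_space NN by (rule NN_prob)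
  assume "a \<le> b"
  then have "{..b} - {..a} = {a<..b}" "{..a} \<subseteq> {..b}" by auto
  then show ?thesis unfolding Phi_meas
    by (metis finite_measure_Diff sets_density sets_lborel atMost_borel)
qed

lemma Phi_lip: "a \<le> b \<Longrightarrow> Phi b - Phi a \<le> b - a"
proof -
  assume ab: "a \<le> b"
  have "emeasure NN {a<..b} \<le> (\<integral>\<^sup>+ x. ennreal (indicator {a<..b} x) \<partial>lborel)"
    by (rule dens_upper) (auto simp: std_le1)
  also have "\<dots> = ennreal (b - a)" using ab by (simp add: ennreal_indicator)
  finally have "measure NN {a<..b} \<le> b - a"
    using ab by (simp add: measure_def enn2real_leI)
  then show ?thesis using Phi_diff ab by simp
qed

lemma meas_from_emeas:
  assumes "finite_measure M" "ennreal r \<le> emeasure M A" "0 \<le> r"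
  shows "r \<le> measure M A"
  using assms by (simp add: finite_measure.emeasure_eq_measure)

lemma tail_pt:
  assumes "s\<^sup>2 \<le> x\<^sup>2"
  shows "std_normal_density x \<le> 2 * exp (- 3 * s\<^sup>2 / 8) * normal_density 0 2 x"
proof -
  have "2*pi*2\<^sup>2 = 2\<^sup>2 * (2*pi)" by simp
  then have sq: "sqrt (2*pi*2\<^sup>2) = 2 * sqrt (2*pi)"
    by (metis real_sqrt_mult real_sqrt_abs abs_numeral)
  have e: "exp (- x\<^sup>2 / 2) \<le> exp (- 3 * s\<^sup>2 / 8) * exp (- x\<^sup>2 / 8)"
    using assms by (simp add: exp_add[symmetric])
  have "std_normal_density x = (1 / sqrt (2 * pi)) * exp (- x\<^sup>2 / 2)" by (rule std_normal_density_def)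
  also have "\<dots> \<le> (1 / sqrt (2 * pi)) * (exp (- 3 * s\<^sup>2 / 8) * exp (- x\<^sup>2 / 8))"
    by (intro mult_left_mono e) auto
  also have "\<dots> = 2 * exp (- 3 * s\<^sup>2 / 8) * normal_density 0 2 x"
    unfolding normal_density_def sq by (simp add: power2_eq_square)
  finally show ?thesis .
qed

lemma tail:
  assumes [measurable]: "A \<in> sets borel" and "\<And>x. x \<in> A \<Longrightarrow> s\<^sup>2 \<le> x\<^sup>2"
  shows "measure NN A \<le> 2 * exp (- 3 * s\<^sup>2 / 8)"
proof -
  interpret prob_space NN by (rule NN_prob)
  have "emeasure NN A \<le> (\<integral>\<^sup>+ x. ennreal (2 * exp (- 3 * s\<^sup>2 / 8) * normal_density 0 2 x) \<partial>lborel)"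
  proof (rule dens_upper)
    fix x assume "x \<in> A"
    then show "std_normal_density x \<le> 2 * exp (- 3 * s\<^sup>2 / 8) * normal_density 0 2 x"
      using tail_pt assms(2) by blast
  qed auto
  also have "\<dots> = ennreal (2 * exp (- 3 * s\<^sup>2 / 8)) * (\<integral>\<^sup>+ x. ennreal (normal_density 0 2 x) \<partial>lborel)"
    by (simp add: ennreal_mult nn_integral_cmult)
  also have "\<dots> = ennreal (2 * exp (- 3 * s\<^sup>2 / 8))" by (simp add: nd_int1)
  finally show ?thesis by (simp add: emeasure_eq_measure)
qed

lemma Phi_strict: "a < b \<Longrightarrow> Phi a < Phi b"
proof -
  assume ab: "a < b"
  interpret prob_space NN by (rule NN_prob)
  define m where "m = (1 / sqrt (2 * pi)) * exp (- (\<bar>a\<bar>+\<bar>b\<bar>)\<^sup>2 / 2)"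
  have mpos: "0 < m" unfolding m_def by simp
  have "ennreal m * emeasure lborel {a<..b} \<le> emeasure NN {a<..b}"
  proof (rule dens_lower)
    fix x assume x: "x \<in> {a<..b}"
    then have "\<bar>x\<bar> \<le> \<bar>\<bar>a\<bar>+\<bar>b\<bar>\<bar>" by auto
    then have "x\<^sup>2 \<le> (\<bar>a\<bar>+\<bar>b\<bar>)\<^sup>2"
      using abs_le_square_iff by blast
    then show "m \<le> std_normal_density x"
      unfolding m_def std_normal_density_def by (intro mult_left_mono) auto
  qed (use mpos in auto)
  then have "ennreal (m * (b - a)) \<le> emeasure NN {a<..b}"
    using ab mpos by (simp add: ennreal_mult)
  then have "m * (b - a) \<le> measure NN {a<..b}"
    using mpos ab by (intro meas_from_emeas) (auto simp: finite_measure_axioms)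
  moreover have "0 < m * (b - a)" using mpos ab by simp
  ultimately show ?thesis using Phi_diff[of a b] ab by simp
qed

lemma Phi_cont: "continuous_on S Phi"
proof (rule lipschitz_on_continuous_on[of 1])
  show "1-lipschitz_on S Phi"
  proof (rule lipschitz_onI)
    fix x y assume "x \<in> S" "y \<in> S"
    show "dist (Phi x) (Phi y) \<le> 1 * dist x y"
    proof (cases "x \<le> y")
      case True
      then show ?thesis using Phi_lip[of x y] Phi_strict[of x y]
        by (cases "x = y") (auto simp: dist_real_def)
    next
      case False
      then show ?thesis using Phi_lip[of y x] Phi_strict[of y x]
        by (auto simp: dist_real_def)
    qed
  qed simp
qed

lemma Phi_low: "s \<ge> 0 \<Longrightarrow> Phi (-s) \<le> 2 * exp (- 3 * s\<^sup>2 / 8)"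
  unfolding Phi_meas
proof (rule tail)
  fix x assume "s \<ge> 0" "x \<in> {..-s}"
  then have "\<bar>s\<bar> \<le> \<bar>x\<bar>" by auto
  then show "s\<^sup>2 \<le> x\<^sup>2" by (simp add: abs_le_square_iff)
qed simp

lemma Phi_high: "s \<ge> 0 \<Longrightarrow> 1 - Phi s \<le> 2 * exp (- 3 * s\<^sup>2 / 8)"
proof -
  assume s: "s \<ge> 0"
  interpret prob_space NN by (rule NN_prob)
  have "1 - Phi s = measure NN {s<..}"
  proof -
    have "space NN - {..s} = {s<..}" by auto
    then show ?thesis unfolding Phi_meas using prob_compl[of "{..s}"] by simp
  qed
  also have "\<dots> \<le> 2 * exp (- 3 * s\<^sup>2 / 8)"
  proof (rule tail)
    fix x assume "x \<in> {s<..}"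
    then have "\<bar>s\<bar> \<le> \<bar>x\<bar>" using s by auto
    then show "s\<^sup>2 \<le> x\<^sup>2" by (simp add: abs_le_square_iff)
  qed simp
  finally show ?thesis .
qed


lemma Phi_exists:
  assumes "0 < \<mu>" "\<mu> < 1"
  shows "\<exists>t. Phi t = \<mu>"
proof -
  define \<epsilon> where "\<epsilon> = min \<mu> (1 - \<mu>)"
  have ep: "0 < \<epsilon>" "\<epsilon> \<le> \<mu>" "\<epsilon> \<le> 1 - \<mu>" using assms by (auto simp: \<epsilon>_def)
  define s where "s = sqrt (16 / (3*\<epsilon>))"
  have s0: "0 \<le> s" unfolding s_def using ep by simp
  have "s\<^sup>2 = 16 / (3*\<epsilon>)" unfolding s_def using ep by simp
  then have z: "3 * s\<^sup>2 / 8 = 2 / \<epsilon>" using ep by (simp add: field_simps)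
  have "1 + 2/\<epsilon> \<le> exp (2/\<epsilon>)" by (rule exp_ge_add_one_self)
  then have "2/\<epsilon> < exp (2/\<epsilon>)" by linarith
  then have "2 / exp (2/\<epsilon>) < \<epsilon>" using ep by (simp add: field_simps)
  then have bnd: "2 * exp (- 3 * s\<^sup>2 / 8) < \<epsilon>"
    using z by (simp add: exp_minus field_simps)
  have lo: "Phi (-s) \<le> \<mu>" using Phi_low[OF s0] bnd ep by linarith
  have hi: "\<mu> \<le> Phi s" using Phi_high[OF s0] bnd ep by linarith
  from IVT'[of Phi "-s" \<mu> s, OF lo hi] s0 Phi_cont show ?thesis by auto
qed

lemma Phi_THE:
  assumes "0 < \<mu>" "\<mu> < 1" "Phi t = \<mu>"
  shows "(THE t. Phi t = \<mu>) = t"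
proof (rule the_equality)
  show "Phi t = \<mu>" by fact
  fix t' assume "Phi t' = \<mu>"
  then show "t' = t" using Phi_strict[of t t'] Phi_strict[of t' t] assms(3)
    by (cases t t' rule: linorder_cases) auto
qed

lemma biv_factor:
  assumes "-1 < \<rho>" "\<rho> < 1"
  shows "bivariate_normal_density \<rho> (x,y) = std_normal_density x * normal_density (\<rho>*x) (sqrt(1-\<rho>\<^sup>2)) y"
proof -
  have r: "0 < 1 - \<rho>\<^sup>2" using assms by (simp add: abs_square_less_1)
  have s2: "(sqrt (1-\<rho>\<^sup>2))\<^sup>2 = 1 - \<rho>\<^sup>2" using r by simp
  have sq: "sqrt (2*pi*(1-\<rho>\<^sup>2)) = sqrt (2*pi) * sqrt (1-\<rho>\<^sup>2)" by (simp add: real_sqrt_mult)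
  have sp: "sqrt (2*pi) * sqrt (2*pi) = 2*pi" by simp
  have ex: "- x\<^sup>2 / 2 + (- (y - \<rho>*x)\<^sup>2 / (2 * (1-\<rho>\<^sup>2)))
            = - (x\<^sup>2 - 2*\<rho>*x*y + y\<^sup>2) / (2 * (1 - \<rho>\<^sup>2))"
    using r by (simp add: field_simps power2_eq_square)
  have "std_normal_density x * normal_density (\<rho>*x) (sqrt(1-\<rho>\<^sup>2)) y
     = (1 / (sqrt (2*pi) * sqrt (2*pi) * sqrt (1-\<rho>\<^sup>2))) *
       exp (- x\<^sup>2 / 2 + (- (y - \<rho>*x)\<^sup>2 / (2 * (1-\<rho>\<^sup>2))))"
    unfolding std_normal_density_def normal_density_def s2 sq exp_add by simp
  also have "\<dots> = bivariate_normal_density \<rho> (x,y)"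
    unfolding ex sp bivariate_normal_density_def by simp
  finally show ?thesis by simp
qed

lemma biv_meas[measurable]: "bivariate_normal_density \<rho> \<in> borel_measurable borel"
  unfolding bivariate_normal_density_def[abs_def] borel_prod[symmetric] by measurable

lemma biv_meas2[measurable]: "bivariate_normal_density \<rho> \<in> borel_measurable (lborel \<Otimes>\<^sub>M lborel)"
  unfolding lborel_prod using biv_meas by simp

lemma marg:
  assumes "-1 < \<rho>" "\<rho> < 1" and S[measurable]: "S \<in> sets borel"
  shows "emeasure (density lborel (\<lambda>p. ennreal (bivariate_normal_density \<rho> p))) {p. fst p \<in> S} = emeasure NN S"
proof -
  have r: "0 < 1 - \<rho>\<^sup>2" using assms by (simp add: abs_square_less_1)
  have "emeasure (density lborel (\<lambda>p. ennreal (bivariate_normal_density \<rho> p))) {p. fst p \<in> S}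
      = (\<integral>\<^sup>+ p. ennreal (bivariate_normal_density \<rho> p) * indicator {p. fst p \<in> S} p \<partial>lborel)"
  proof (rule emeasure_density)
    have "{p. fst p \<in> S} = S \<times> UNIV" by auto
    moreover have "S \<times> UNIV \<in> sets (borel \<Otimes>\<^sub>M (borel::real measure))"
      by (rule pair_measureI) auto
    ultimately show "{p::real\<times>real. fst p \<in> S} \<in> sets lborel"
      by (metis borel_prod sets_lborel)
  qed auto
  also have "\<dots> = (\<integral>\<^sup>+ p. ennreal (bivariate_normal_density \<rho> p) * indicator S (fst p) \<partial>(lborel \<Otimes>\<^sub>M lborel))"
    by (simp only: lborel_prod) (simp add: indicator_def)
  also have "\<dots> = (\<integral>\<^sup>+ x. \<integral>\<^sup>+ y. ennreal (bivariate_normal_density \<rho> (x,y)) * indicator S (fst (x,y)) \<partial>lborel \<partial>lborel)"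
    by (rule lborel.nn_integral_fst[symmetric]) measurable
  also have "\<dots> = (\<integral>\<^sup>+ x. ennreal (std_normal_density x) * indicator S x * (\<integral>\<^sup>+ y. ennreal (normal_density (\<rho>*x) (sqrt(1-\<rho>\<^sup>2)) y) \<partial>lborel) \<partial>lborel)"
  proof (rule nn_integral_cong)
    fix x
    have "(\<integral>\<^sup>+ y. ennreal (bivariate_normal_density \<rho> (x,y)) * indicator S (fst (x,y)) \<partial>lborel)
       = (\<integral>\<^sup>+ y. (ennreal (std_normal_density x) * indicator S x) * ennreal (normal_density (\<rho>*x) (sqrt(1-\<rho>\<^sup>2)) y) \<partial>lborel)"
      using assms by (intro nn_integral_cong) (simp add: biv_factor ennreal_mult indicator_def)
    also have "\<dots> = ennreal (std_normal_density x) * indicator S x * (\<integral>\<^sup>+ y. ennreal (normal_density (\<rho>*x) (sqrt(1-\<rho>\<^sup>2)) y) \<partial>lborel)"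
      by (rule nn_integral_cmult) measurable
    finally show "(\<integral>\<^sup>+ y. ennreal (bivariate_normal_density \<rho> (x,y)) * indicator S (fst (x,y)) \<partial>lborel)
       = ennreal (std_normal_density x) * indicator S x * (\<integral>\<^sup>+ y. ennreal (normal_density (\<rho>*x) (sqrt(1-\<rho>\<^sup>2)) y) \<partial>lborel)" .
  qed
  also have "\<dots> = (\<integral>\<^sup>+ x. ennreal (std_normal_density x) * indicator S x \<partial>lborel)"
    using r by (simp add: nd_int1)
  also have "\<dots> = emeasure NN S"
    by (rule emeasure_density[symmetric]) auto
  finally show ?thesis .
qed


lemma box_dens:
  assumes d: "0 < \<delta>" "\<delta> \<le> 1/2" and x: "t - sqrt \<delta> \<le> x" "x \<le> t" and y: "t < y" "y \<le> t + sqrt \<delta>"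
  shows "exp (-(8 + 3*t\<^sup>2/4)) / (2*pi* sqrt 2* sqrt \<delta>) \<le> bivariate_normal_density (1-\<delta>) (x,y)"
proof -
  define D where "D = 1 - (1-\<delta>)\<^sup>2"
  have D: "D = \<delta>*(2-\<delta>)" unfolding D_def by (simp add: power2_eq_square algebra_simps)
  have Dpos: "0 < D" using d D by simp
  define Nq where "Nq = x\<^sup>2 - 2*(1-\<delta>)*x*y + y\<^sup>2"
  have Nq: "Nq = (x-y)\<^sup>2 + 2*\<delta>*(x*y)" unfolding Nq_def by (simp add: power2_eq_square algebra_simps)
  have a1: "sqrt \<delta> \<le> 1" using d by simp
  have "\<bar>x - y\<bar> \<le> \<bar>2 * sqrt \<delta>\<bar>" using x y by auto
  then have "(x-y)\<^sup>2 \<le> (2 * sqrt \<delta>)\<^sup>2" using abs_le_square_iff by blast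
  then have xy1: "(x-y)\<^sup>2 \<le> 4*\<delta>" using d by (simp add: power_mult_distrib)
  have ax: "\<bar>x\<bar> \<le> \<bar>t\<bar> + 1" and ay: "\<bar>y\<bar> \<le> \<bar>t\<bar> + 1" using x y a1 by (smt (verit))+
  have "x*y \<le> \<bar>x\<bar>*\<bar>y\<bar>" by (metis abs_ge_self abs_mult)
  also have "\<dots> \<le> (\<bar>t\<bar>+1)*(\<bar>t\<bar>+1)" using ax ay by (intro mult_mono) auto
  finally have xy2: "x*y \<le> (\<bar>t\<bar>+1)*(\<bar>t\<bar>+1)" .
  have "Nq \<le> 4*\<delta> + 2*\<delta>*((\<bar>t\<bar>+1)*(\<bar>t\<bar>+1))"
  proof -
    have "2*\<delta>*(x*y) \<le> 2*\<delta>*((\<bar>t\<bar>+1)*(\<bar>t\<bar>+1))" using xy2 d by (intro mult_left_mono) auto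
    then show ?thesis unfolding Nq using xy1 by linarith
  qed
  also have "\<dots> = \<delta> * (6 + 4*\<bar>t\<bar> + 2*t\<^sup>2)" by (simp add: algebra_simps power2_eq_square)
  also have "\<dots> \<le> \<delta> * (24 + 9*t\<^sup>2/4)"
  proof -
    have "0 \<le> (\<bar>t\<bar>/2 - 4)\<^sup>2" by simp
    then have "6 + 4*\<bar>t\<bar> + 2*t\<^sup>2 \<le> 24 + 9*t\<^sup>2/4"
      by (simp add: power2_eq_square algebra_simps)
    then show ?thesis using d by (intro mult_left_mono) auto
  qed
  also have "\<dots> = 3*\<delta>*(8 + 3*t\<^sup>2/4)" by (simp add: algebra_simps)
  also have "\<dots> \<le> 2*D*(8 + 3*t\<^sup>2/4)"
    unfolding D using d by (intro mult_right_mono) (auto simp: add_nonneg_nonneg)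
  finally have "Nq \<le> 2*D*(8 + 3*t\<^sup>2/4)" .
  then have "Nq / (2*D) \<le> 8 + 3*t\<^sup>2/4" using Dpos by (simp add: divide_le_eq mult.commute)
  then have e: "exp (-(8 + 3*t\<^sup>2/4)) \<le> exp (- Nq / (2*D))" by simp
  have "D \<le> 2*\<delta>" unfolding D using d by (simp add: algebra_simps)
  then have "sqrt D \<le> sqrt (2*\<delta>)" by simp
  also have "\<dots> = sqrt 2 * sqrt \<delta>" by (simp add: real_sqrt_mult)
  finally have sD: "sqrt D \<le> sqrt 2 * sqrt \<delta>" .
  have "exp (-(8 + 3*t\<^sup>2/4)) / (2*pi* sqrt 2* sqrt \<delta>) \<le> exp (- Nq / (2*D)) / (2*pi* sqrt D)"
    using e sD Dpos by (intro frac_le) (auto simp: mult.assoc)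
  also have "\<dots> = bivariate_normal_density (1-\<delta>) (x,y)"
    unfolding bivariate_normal_density_def D_def Nq_def by simp
  finally show ?thesis .
qed

lemma prod_sets: "S \<in> sets borel \<Longrightarrow> T \<in> sets borel \<Longrightarrow> (S \<times> T :: (real\<times>real) set) \<in> sets borel"
  by (metis borel_prod pair_measureI)

lemma t_bound:
  assumes "\<delta> powr c \<le> Phi t" "Phi t \<le> 1 - \<delta> powr c"
  shows "\<delta> powr c \<le> 2 * exp (- 3 * t\<^sup>2 / 8)"
proof (cases "t \<le> 0")
  case True
  then show ?thesis using Phi_low[of "-t"] assms by simp
next
  case False
  then show ?thesis using Phi_high[of t] assms by simp
qed


theorem lemma10:
  fixes c :: real
  assumes "0 < c" and "c < 1"
  shows "\<exists>C>0. \<exists>\<delta>0>0. \<forall>\<delta> \<mu>. 0 < \<delta> \<and> \<delta> < \<delta>0 \<and> \<delta> < 1 \<and>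
           \<delta> powr c \<le> \<mu> \<and> \<mu> \<le> 1 - \<delta> powr c \<longrightarrow>
           \<mu> - Gamma_noise (1 - \<delta>) \<mu> \<ge> C * \<delta> powr (1/2 + 2*c)"
proof -
  have key: "exp (-8) / (8 * pi * sqrt 2) * \<delta> powr (1/2 + 2*c) \<le> \<mu> - Gamma_noise (1 - \<delta>) \<mu>"
    if H: "0 < \<delta> \<and> \<delta> < 1/2 \<and> \<delta> < 1 \<and> \<delta> powr c \<le> \<mu> \<and> \<mu> \<le> 1 - \<delta> powr c"
    for \<delta> \<mu> :: real
  proof -
  from H have d: "0 < \<delta>" "\<delta> \<le> 1/2" and mu: "\<delta> powr c \<le> \<mu>" "\<mu> \<le> 1 - \<delta> powr c" by auto
  have dc: "0 < \<delta> powr c" using d by simp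
  have mu01: "0 < \<mu>" "\<mu> < 1" using mu dc by linarith+
  obtain t where t: "Phi t = \<mu>" using Phi_exists[OF mu01] by blast
  have tthe: "(THE t. Phi t = \<mu>) = t" using Phi_THE[OF mu01 t] .
  define \<rho> where "\<rho> = 1 - \<delta>"
  have r: "-1 < \<rho>" "\<rho> < 1" using d unfolding \<rho>_def by auto
  define M2 where "M2 = density (lborel :: (real \<times> real) measure) (\<lambda>p. ennreal (bivariate_normal_density \<rho> p))"
  have sM2: "sets M2 = sets borel" unfolding M2_def by simp
  have "emeasure M2 (space M2) = 1"
  proof -
    have "space M2 = {p. fst p \<in> UNIV}" unfolding M2_def by simp
    then have "emeasure M2 (space M2) = emeasure NN UNIV"
      unfolding M2_def using marg[OF r, of UNIV] by simp
    also have "\<dots> = 1" using prob_space.emeasure_space_1[OF NN_prob] by simp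
    finally show ?thesis .
  qed
  then interpret M2: prob_space M2 by (rule prob_spaceI)
  define A where "A = ({..t} \<times> UNIV :: (real\<times>real) set)"
  define B where "B = ({..t} \<times> {..t} :: (real\<times>real) set)"
  define a where "a = sqrt \<delta>"
  define Bx where "Bx = ({t - a..t} \<times> {t<..t+a} :: (real\<times>real) set)"
  have Am: "A \<in> sets M2" unfolding sM2 A_def by (intro prod_sets) auto
  have Bm: "B \<in> sets M2" unfolding sM2 B_def by (intro prod_sets) auto
  have Bxm: "Bx \<in> sets M2" unfolding sM2 Bx_def by (intro prod_sets) auto
  have G: "Gamma_noise (1 - \<delta>) \<mu> = measure M2 B"
  proof -
    have "{p. fst p \<le> t \<and> snd p \<le> t} = B" unfolding B_def by auto
    then show ?thesis unfolding Gamma_noise_def Let_def tthe M2_def \<rho>_def by simp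
  qed
  have PA: "measure M2 A = \<mu>"
  proof -
    have "A = {p. fst p \<in> {..t}}" unfolding A_def by auto
    then have "emeasure M2 A = emeasure NN {..t}" unfolding M2_def using marg[OF r, of "{..t}"] by simp
    then show ?thesis using t unfolding Phi_meas measure_def by simp
  qed
  have "B \<subseteq> A" unfolding A_def B_def by auto
  then have "measure M2 A - measure M2 B = measure M2 (A - B)"
    using M2.finite_measure_Diff[OF Am Bm] by simp
  moreover have "measure M2 Bx \<le> measure M2 (A - B)"
  proof (rule M2.finite_measure_mono)
    show "Bx \<subseteq> A - B" unfolding Bx_def A_def B_def by auto
    show "A - B \<in> sets M2" using Am Bm by auto
  qed
  ultimately have main1: "measure M2 Bx \<le> \<mu> - Gamma_noise (1 - \<delta>) \<mu>" using G PA by simp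
  define m2 where "m2 = exp (-(8 + 3*t\<^sup>2/4)) / (2*pi* sqrt 2 * sqrt \<delta>)"
  have m2pos: "0 < m2" unfolding m2_def using d by simp
  have "emeasure (lborel :: (real\<times>real) measure) Bx = emeasure (lborel \<Otimes>\<^sub>M lborel) Bx"
    by (simp only: lborel_prod)
  also have "\<dots> = emeasure lborel {t - a..t} * emeasure lborel {t<..t+a}"
    unfolding Bx_def by (rule lborel.emeasure_pair_measure_Times) auto
  also have "\<dots> = ennreal (a * a)"
    using d unfolding a_def by (simp add: ennreal_mult[symmetric])
  also have "a * a = \<delta>" unfolding a_def using d by simp
  finally have eBx: "emeasure (lborel :: (real\<times>real) measure) Bx = ennreal \<delta>" .
  have "ennreal m2 * emeasure lborel Bx \<le> emeasure M2 Bx"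
    unfolding M2_def
  proof (rule dens_lower)
    show "Bx \<in> sets lborel" using Bxm sM2 by simp
    fix p assume "p \<in> Bx"
    then obtain x y where p: "p = (x,y)" "t - a \<le> x" "x \<le> t" "t < y" "y \<le> t + a"
      unfolding Bx_def by auto
    show "m2 \<le> bivariate_normal_density \<rho> p"
      unfolding p(1) m2_def \<rho>_def using box_dens[OF d, of t x y] p a_def by simp
  qed (use m2pos in auto)
  then have "ennreal (m2 * \<delta>) \<le> emeasure M2 Bx" using eBx m2pos d by (simp add: ennreal_mult)
  then have main2: "m2 * \<delta> \<le> measure M2 Bx"
    using m2pos d by (intro meas_from_emeas) (auto simp: M2.finite_measure_axioms)
  have tb: "\<delta> powr c \<le> 2 * exp (- 3 * t\<^sup>2 / 8)" using t_bound[of \<delta> c t] t mu by simp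
  have "(\<delta> powr c) * (\<delta> powr c) \<le> (2 * exp (- 3 * t\<^sup>2 / 8)) * (2 * exp (- 3 * t\<^sup>2 / 8))"
    using tb dc by (intro mult_mono) auto
  moreover have "\<delta> powr (c + c) = \<delta> powr c * \<delta> powr c" by (rule powr_add)
  moreover have "2*c = c + c" by simp
  moreover have "exp (- 3 * t\<^sup>2 / 8) * exp (- 3 * t\<^sup>2 / 8) = exp (- 3 * t\<^sup>2 / 8 + - 3 * t\<^sup>2 / 8)"
    by (rule exp_add[symmetric])
  moreover have "- 3 * t\<^sup>2 / 8 + - 3 * t\<^sup>2 / 8 = - (3 * t\<^sup>2 / 4)" by simp
  ultimately have tb2: "\<delta> powr (2*c) \<le> 4 * exp (- (3 * t\<^sup>2 / 4))"
    by (metis (no_types, lifting) mult.assoc mult.left_commute mult_2_right numeral_Bit0 numeral_One)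
  have "exp (-8) / (8 * pi * sqrt 2) * \<delta> powr (1/2 + 2*c)
       = exp (-8) / (8 * pi * sqrt 2) * sqrt \<delta> * \<delta> powr (2*c)"
    using d by (simp add: powr_add powr_half_sqrt)
  also have "\<dots> \<le> exp (-8) / (8 * pi * sqrt 2) * sqrt \<delta> * (4 * exp (- (3 * t\<^sup>2 / 4)))"
    using tb2 d by (intro mult_left_mono) auto
  also have "\<dots> = m2 * \<delta>"
  proof -
    have "\<delta> / sqrt \<delta> = sqrt \<delta>" using d by (metis real_div_sqrt less_imp_le)
    then show ?thesis unfolding m2_def using d
      by (simp add: field_simps exp_add[symmetric] exp_minus)
  qed
  finally show "exp (-8) / (8 * pi * sqrt 2) * \<delta> powr (1/2 + 2*c) \<le> \<mu> - Gamma_noise (1 - \<delta>) \<mu>"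
    using main1 main2 by linarith
qed
  show ?thesis
    by (rule exI[of _ "exp (-8) / (8 * pi * sqrt 2)"], intro conjI, simp,
        rule exI[of _ "1/2"], intro conjI, simp, intro allI impI) (rule key, simp)
qed

end
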